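(* Fix integers $T_0\ge 1$ and $t\ge 1$, real parameters $\beta_0,\beta_A$, nonnegative lag weights $g_1,g_2,\dots$ and $\pi_1,\pi_2,\dots$, ascertainment rates $\alpha_1,\dots,\alpha_t$, and a fixed intervention sequence $a_{-T_0+1},\dots,a_0,a_1,\dots,a_t$. Let the seeding values be deterministic: $I_s=0$ for $s\le -T_0$ and $I_s$ given (e.g. $I_s=e^{\mu}$) for $s=-T_0+1,\dots,0$, and write $\bar I_0=(I_{-T_0+1},\dots,I_0)^\top$. Let $I_r(\bar a_r)$, $Y_r(\bar a_r)$, $r=1,\dots,t$, be the counterfactual infection and outcome processes under the intervention fixing $A_s=a_s$ for all $s$, with integrable values, satisfying (with $I_s(\bar a_s):=I_s$ for $s\le 0$) for each $r=1,\dots,t$: \[ \mathbb{E}\big[I_r(\bar a_r)\,\big|\,I_s(\bar a_s),\,s<r;\ Y_s(\bar a_s),\,s<r\big]=\sum_{s<r} e^{\beta_0+\beta_A a_s}\, g_{r-s}\, I_s(\bar a_s)\quad\text{(exponential model)}, \] \[ \mathbb{E}\big[Y_r(\bar a_r)\,\big|\,I_s(\bar a_s),\,s\le r;\ Y_s(\bar a_s),\,s<r\big]=\alpha_r\sum_{s<r}\pi_{r-s}\, I_s(\bar a_s). \] Define the $t\times t$ matrix $\Lambda^e$ by $\Lambda^e(r,s)=g_{r-s}e^{\beta_0+\beta_A a_s}$ for $s<r$ and $0$ otherwise; the $t\times T_0$ matrix $\Lambda^e_0$ with rows indexed by $r=1,\dots,t$ and columns by $s=-T_0+1,\dots,0$,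 $\Lambda^e_0(r,s)=g_{r-s}e^{\beta_0+\beta_A a_s}$; the $t\times t$ matrix $\Pi$ with $\Pi(r,s)=\pi_{r-s}\alpha_r$ for $s<r$ and $0$ otherwise; and the $t\times T_0$ matrix $\Pi_0$ with $\Pi_0(r,s)=\pi_{r-s}\alpha_r$ for $s=-T_0+1,\dots,0$. Then \[ \mathbb{E}[I_t(\bar a_t)]=\big[(\mathrm{id}-\Lambda^e)^{-1}\Lambda^e_0\,\bar I_0\big]_t,\qquad \mathbb{E}[Y_t(\bar a_t)]=\big[\{\Pi(\mathrm{id}-\Lambda^e)^{-1}\Lambda^e_0+\Pi_0\}\,\bar I_0\big]_t, \] where $[v]_t$ denotes the $t$-th (last) entry of the vector $v$. The same formulas hold for the multiplicative model, in which the infection equation is replaced by \[ \mathbb{E}\big[I_r(\bar a_r)\,\big|\,I_s(\bar a_s),\,s<r;\ Y_s(\bar a_s),\,s<r\big]=R(\bar a_r,\beta)\sum_{s<r} g_{r-s}\, I_s(\bar a_s),\qquad R(\bar a_r,\beta)=\frac{K}{1+\exp(\beta_0+\beta_A a_r)} \] for a constant $K>0$, with $\Lambda^e,\Lambda^e_0$ replaced respectively by $\Lambda^m$, $\Lambda^m_0$ defined by $\Lambda^m(r,s)=g_{r-s}R(\bar a_r,\beta)$ for $s<r$ (and $0$ otherwise) and $\Lambda^m_0(r,s)=g_{r-s}R(\bar a_r,\beta)$ for $s=-T_0+1,\dots,0$.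
   Context: This concerns the semi-mechanistic (Hawkes-type) epidemic model: $I_t$ are (unobserved) infections, $Y_t$ observed outcomes (e.g. deaths), $A_t$ an intervention, $g$ the generation-interval distribution and $\pi$ the infection-to-outcome delay distribution, $\alpha_t$ the ascertainment rate and $R$ the reproduction number. The counterfactual $I_t(\bar a_t)$ (resp. $Y_t(\bar a_t)$) is the value $I_t$ (resp. $Y_t$) would take if the intervention history $(A_s)_{s\le t}$ were set to $\bar a_t=(a_s)_{s\le t}$; under this intervention the model equations above hold with $A_s$ replaced by the fixed values $a_s$. $\mathrm{id}$ denotes the $t\times t$ identity matrix (note $\Lambda^e,\Lambda^m$ are strictly lower triangular so $\mathrm{id}-\Lambda$ is invertible). *)

theory Defs
  imports "HOL-Probability.Probability" "Jordan_Normal_Form.Gauss_Jordan_Elimination"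
begin

definition gen_sigma :: "'a measure \<Rightarrow> ('a \<Rightarrow> real) set \<Rightarrow> 'a measure" where
  "gen_sigma M Xs = sigma (space M) (\<Union>X\<in>Xs. {X -` B \<inter> space M | B. B \<in> sets borel})"

(* Time points are integers. Rows r = 1..t are stored at index i = r-1;
   seeding columns s = -T0+1..0 are stored at index j = s + T0 - 1. *)

definition LamM :: "nat \<Rightarrow> (int \<Rightarrow> int \<Rightarrow> real) \<Rightarrow> real mat" where
  "LamM t W = mat t t (\<lambda>(i,j). if j < i then W (int i + 1) (int j + 1) else 0)"

definition LamM0 :: "nat \<Rightarrow> nat \<Rightarrow> (int \<Rightarrow> int \<Rightarrow> real) \<Rightarrow> real mat" where
  "LamM0 t T0 W = mat t T0 (\<lambda>(i,j). W (int i + 1) (int j - int T0 + 1))"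

definition W_exp :: "(nat \<Rightarrow> real) \<Rightarrow> real \<Rightarrow> real \<Rightarrow> (int \<Rightarrow> real) \<Rightarrow> int \<Rightarrow> int \<Rightarrow> real" where
  "W_exp g \<beta>0 \<beta>A a r s = g (nat (r - s)) * exp (\<beta>0 + \<beta>A * a s)"

definition R_mult :: "real \<Rightarrow> real \<Rightarrow> real \<Rightarrow> (int \<Rightarrow> real) \<Rightarrow> int \<Rightarrow> real" where
  "R_mult K \<beta>0 \<beta>A a r = K / (1 + exp (\<beta>0 + \<beta>A * a r))"

definition W_mult :: "real \<Rightarrow> (nat \<Rightarrow> real) \<Rightarrow> real \<Rightarrow> real \<Rightarrow> (int \<Rightarrow> real) \<Rightarrow> int \<Rightarrow> int \<Rightarrow> real" where
  "W_mult K g \<beta>0 \<beta>A a r s = g (nat (r - s)) * R_mult K \<beta>0 \<beta>A a r"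

definition PiW :: "(nat \<Rightarrow> real) \<Rightarrow> (int \<Rightarrow> real) \<Rightarrow> int \<Rightarrow> int \<Rightarrow> real" where
  "PiW \<pi> \<alpha> r s = \<pi> (nat (r - s)) * \<alpha> r"

definition Ibar0 :: "nat \<Rightarrow> (int \<Rightarrow> real) \<Rightarrow> real vec" where
  "Ibar0 T0 Iseed = vec T0 (\<lambda>j. Iseed (int j - int T0 + 1))"

definition cf_model ::
  "'a measure \<Rightarrow> nat \<Rightarrow> nat \<Rightarrow> (int \<Rightarrow> real) \<Rightarrow> (int \<Rightarrow> int \<Rightarrow> real) \<Rightarrow> (nat \<Rightarrow> real)
   \<Rightarrow> (int \<Rightarrow> real) \<Rightarrow> (int \<Rightarrow> 'a \<Rightarrow> real) \<Rightarrow> (int \<Rightarrow> 'a \<Rightarrow> real) \<Rightarrow> bool" where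
  "cf_model M T0 t Iseed W \<pi> \<alpha> I Y \<longleftrightarrow>
     (\<forall>s \<le> 0. \<forall>\<omega>\<in>space M. I s \<omega> = (if s \<le> - int T0 then 0 else Iseed s)) \<and>
     (\<forall>r\<in>{1..int t}. integrable M (I r) \<and> integrable M (Y r)) \<and>
     (\<forall>r\<in>{1..int t}.
        AE \<omega> in M. real_cond_exp M
            (gen_sigma M (I ` {s. s < r} \<union> Y ` {1..<r})) (I r) \<omega>
          = (\<Sum>s\<in>{1 - int T0..<r}. W r s * I s \<omega>)) \<and>
     (\<forall>r\<in>{1..int t}.
        AE \<omega> in M. real_cond_exp M
            (gen_sigma M (I ` {s. s \<le> r} \<union> Y ` {1..<r})) (Y r) \<omega>
          = \<alpha> r * (\<Sum>s\<in>{1 - int T0..<r}. \<pi> (nat (r - s)) * I s \<omega>))"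

end

theory Submission imports Defs "Jordan_Normal_Form.Determinant" begin

lemma split_sum:
  fixes f :: "int \<Rightarrow> real" and T0 i :: nat
  shows "(\<Sum>s\<in>{1 - int T0..<int i + 1}. f s) =
    (\<Sum>j<T0. f (int j - int T0 + 1)) + (\<Sum>k<i. f (int k + 1))"
proof -
  have d: "{1 - int T0..<int i + 1} = {1 - int T0..<1} \<union> {1..<int i + 1}" by auto
  have a: "{1 - int T0..<1} = (\<lambda>j. int j - int T0 + 1) ` {..<T0}"
  proof -
    { fix s assume "s \<in> {1 - int T0..<1}"
      then have "s \<in> (\<lambda>j. int j - int T0 + 1) ` {..<T0}"
        by (intro image_eqI[where x="nat (s + int T0 - 1)"]) auto }
    then show ?thesis by auto
  qed
  have b: "{1..<int i + 1} = (\<lambda>k. int k + 1) ` {..<i}"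
  proof -
    { fix s assume "s \<in> {1..<int i + 1}"
      then have "s \<in> (\<lambda>k. int k + 1) ` {..<i}"
        by (intro image_eqI[where x="nat (s - 1)"]) auto }
    then show ?thesis by auto
  qed
  have "(\<Sum>s\<in>{1 - int T0..<int i + 1}. f s) = (\<Sum>s\<in>{1 - int T0..<1}. f s) + (\<Sum>s\<in>{1..<int i + 1}. f s)"
    unfolding d by (rule sum.union_disjoint) auto
  also have "(\<Sum>s\<in>{1 - int T0..<1}. f s) = (\<Sum>j<T0. f (int j - int T0 + 1))"
    unfolding a by (subst sum.reindex) (auto simp: inj_on_def)
  also have "(\<Sum>s\<in>{1..<int i + 1}. f s) = (\<Sum>k<i. f (int k + 1))"
    unfolding b by (subst sum.reindex) (auto simp: inj_on_def)
  finally show ?thesis .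
qed

lemma LamM_carrier: "LamM t W \<in> carrier_mat t t" unfolding LamM_def by auto
lemma LamM0_carrier: "LamM0 t T0 W \<in> carrier_mat t T0" unfolding LamM0_def by auto
lemma Ibar0_carrier: "Ibar0 T0 I \<in> carrier_vec T0" unfolding Ibar0_def by auto

lemma LamM_mult: assumes "i < t" "x \<in> carrier_vec t"
  shows "(LamM t W *\<^sub>v x) $ i = (\<Sum>k<i. W (int i + 1) (int k + 1) * x $ k)"
proof -
  have "(LamM t W *\<^sub>v x) $ i = (\<Sum>j\<in>{0..<t}. (if j < i then W (int i + 1) (int j + 1) else 0) * x $ j)"
    using assms unfolding LamM_def by (simp add: scalar_prod_def)
  also have "\<dots> = (\<Sum>j\<in>{0..<i}. W (int i + 1) (int j + 1) * x $ j)"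
    using assms by (intro sum.mono_neutral_cong_right) auto
  finally show ?thesis by (simp add: lessThan_atLeast0)
qed

lemma LamM0_mult: assumes "i < t"
  shows "(LamM0 t T0 W *\<^sub>v Ibar0 T0 I) $ i = (\<Sum>j<T0. W (int i + 1) (int j - int T0 + 1) * I (int j - int T0 + 1))"
  using assms unfolding LamM0_def Ibar0_def by (simp add: scalar_prod_def lessThan_atLeast0)


lemma gen_sigma_subalg:
  assumes "\<And>X. X \<in> Xs \<Longrightarrow> X \<in> borel_measurable M"
  shows "subalgebra M (gen_sigma M Xs)"
proof -
  let ?G = "(\<Union>X\<in>Xs. {X -` B \<inter> space M | B. B \<in> sets borel})"
  have G: "?G \<subseteq> Pow (space M)" by auto
  have GM: "?G \<subseteq> sets M" using assms by (auto intro: measurable_sets)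
  show ?thesis unfolding subalgebra_def gen_sigma_def
    using G GM by (auto simp: sets.sigma_sets_subset)
qed

lemma cf_expect:
  assumes P: "prob_space M" and C: "cf_model M T0 t Iseed W \<pi> \<alpha> I Y"
  shows "\<And>s. s \<le> 0 \<Longrightarrow> integral\<^sup>L M (I s) = (if s \<le> - int T0 then 0 else Iseed s)"
    and "\<And>s. s \<le> int t \<Longrightarrow> integrable M (I s)"
    and "\<And>r. r \<in> {1..int t} \<Longrightarrow> integral\<^sup>L M (I r) = (\<Sum>s\<in>{1 - int T0..<r}. W r s * integral\<^sup>L M (I s))"
    and "\<And>r. r \<in> {1..int t} \<Longrightarrow> integral\<^sup>L M (Y r) = \<alpha> r * (\<Sum>s\<in>{1 - int T0..<r}. \<pi> (nat (r - s)) * integral\<^sup>L M (I s))"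
proof -
  interpret prob_space M by (rule P)
  note C = C[unfolded cf_model_def]
  have seed: "\<And>s \<omega>. s \<le> 0 \<Longrightarrow> \<omega> \<in> space M \<Longrightarrow> I s \<omega> = (if s \<le> - int T0 then 0 else Iseed s)"
    using C by blast
  show E0: "integral\<^sup>L M (I s) = (if s \<le> - int T0 then 0 else Iseed s)" if "s \<le> 0" for s
  proof -
    have "integral\<^sup>L M (I s) = integral\<^sup>L M (\<lambda>_. (if s \<le> - int T0 then 0 else Iseed s))"
      using seed[OF that] by (intro Bochner_Integration.integral_cong) auto
    then show ?thesis by (simp add: prob_space)
  qed
  show INT: "integrable M (I s)" if "s \<le> int t" for s
  proof (cases "s \<le> 0")
    case True
    have "integrable M (\<lambda>_. (if s \<le> - int T0 then 0 else Iseed s))" by simp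
    moreover have "integrable M (I s) = integrable M (\<lambda>_. (if s \<le> - int T0 then 0 else Iseed s))"
      using seed[OF True] by (intro Bochner_Integration.integrable_cong refl) auto
    ultimately show ?thesis by simp
  next
    case False then show ?thesis using C that by auto
  qed
  have MI: "I s \<in> borel_measurable M" if "s \<le> int t" for s using INT[OF that] by auto
  have MY: "Y s \<in> borel_measurable M" if "s \<in> {1..int t}" for s using C that by auto
  show "integral\<^sup>L M (I r) = (\<Sum>s\<in>{1 - int T0..<r}. W r s * integral\<^sup>L M (I s))"
    if r: "r \<in> {1..int t}" for r
  proof -
    let ?F = "gen_sigma M (I ` {s. s < r} \<union> Y ` {1..<r})"
    have "subalgebra M ?F" using r MI MY by (intro gen_sigma_subalg) auto
    then interpret finite_measure_subalgebra M ?F by unfold_locales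
    have iI: "integrable M (I r)" using C r by auto
    have AE: "AE \<omega> in M. real_cond_exp M ?F (I r) \<omega> = (\<Sum>s\<in>{1 - int T0..<r}. W r s * I s \<omega>)"
      using C r by blast
    have "integral\<^sup>L M (I r) = integral\<^sup>L M (real_cond_exp M ?F (I r))"
      using real_cond_exp_int(2)[OF iI] by simp
    also have "\<dots> = integral\<^sup>L M (\<lambda>\<omega>. \<Sum>s\<in>{1 - int T0..<r}. W r s * I s \<omega>)"
      using AE r MI by (intro integral_cong_AE) auto
    also have "\<dots> = (\<Sum>s\<in>{1 - int T0..<r}. integral\<^sup>L M (\<lambda>\<omega>. W r s * I s \<omega>))"
      using r INT by (intro Bochner_Integration.integral_sum) auto
    also have "\<dots> = (\<Sum>s\<in>{1 - int T0..<r}. W r s * integral\<^sup>L M (I s))"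
      by simp
    finally show ?thesis .
  qed
  show "integral\<^sup>L M (Y r) = \<alpha> r * (\<Sum>s\<in>{1 - int T0..<r}. \<pi> (nat (r - s)) * integral\<^sup>L M (I s))"
    if r: "r \<in> {1..int t}" for r
  proof -
    let ?F = "gen_sigma M (I ` {s. s \<le> r} \<union> Y ` {1..<r})"
    have "subalgebra M ?F" using r MI MY by (intro gen_sigma_subalg) auto
    then interpret finite_measure_subalgebra M ?F by unfold_locales
    have iY: "integrable M (Y r)" using C r by auto
    have AE: "AE \<omega> in M. real_cond_exp M ?F (Y r) \<omega> = \<alpha> r * (\<Sum>s\<in>{1 - int T0..<r}. \<pi> (nat (r - s)) * I s \<omega>)"
      using C r by blast
    have "integral\<^sup>L M (Y r) = integral\<^sup>L M (real_cond_exp M ?F (Y r))"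
      using real_cond_exp_int(2)[OF iY] by simp
    also have "\<dots> = integral\<^sup>L M (\<lambda>\<omega>. \<alpha> r * (\<Sum>s\<in>{1 - int T0..<r}. \<pi> (nat (r - s)) * I s \<omega>))"
      using AE r MI by (intro integral_cong_AE) auto
    also have "\<dots> = \<alpha> r * (\<Sum>s\<in>{1 - int T0..<r}. \<pi> (nat (r - s)) * integral\<^sup>L M (I s))"
      using r INT by (subst integral_mult_right_zero, subst Bochner_Integration.integral_sum) auto
    finally show ?thesis .
  qed
qed


lemma lin_alg:
  fixes e :: "int \<Rightarrow> real"
  assumes t1: "t \<ge> 1"
    and seed: "\<And>s. 1 - int T0 \<le> s \<Longrightarrow> s \<le> 0 \<Longrightarrow> e s = Iseed s"
    and rec: "\<And>r. r \<in> {1..int t} \<Longrightarrow> e r = (\<Sum>s\<in>{1 - int T0..<r}. W r s * e s)"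
    and yrec: "ey = \<alpha> (int t) * (\<Sum>s\<in>{1 - int T0..<int t}. \<pi> (nat (int t - s)) * e s)"
  shows "let L = LamM t W; L0 = LamM0 t T0 W;
            P = LamM t (PiW \<pi> \<alpha>); P0 = LamM0 t T0 (PiW \<pi> \<alpha>);
            Inv = the (mat_inverse (1\<^sub>m t - L))
        in e (int t) = ((Inv * L0) *\<^sub>v Ibar0 T0 Iseed) $ (t - 1)
         \<and> ey = ((P * Inv * L0 + P0) *\<^sub>v Ibar0 T0 Iseed) $ (t - 1)"
proof -
  define L where "L = LamM t W"
  define L0 where "L0 = LamM0 t T0 W"
  define P where "P = LamM t (PiW \<pi> \<alpha>)"
  define P0 where "P0 = LamM0 t T0 (PiW \<pi> \<alpha>)"
  define b where "b = Ibar0 T0 Iseed"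
  define A where "A = 1\<^sub>m t - L"
  define x where "x = vec t (\<lambda>i. e (int i + 1))"
  have Lc: "L \<in> carrier_mat t t" unfolding L_def by (rule LamM_carrier)
  have Pc: "P \<in> carrier_mat t t" unfolding P_def by (rule LamM_carrier)
  have L0c: "L0 \<in> carrier_mat t T0" unfolding L0_def by (rule LamM0_carrier)
  have P0c: "P0 \<in> carrier_mat t T0" unfolding P0_def by (rule LamM0_carrier)
  have bc: "b \<in> carrier_vec T0" unfolding b_def by (rule Ibar0_carrier)
  have Ac: "A \<in> carrier_mat t t" unfolding A_def using Lc by auto
  have xc: "x \<in> carrier_vec t" unfolding x_def by auto
  have seedsum: "(\<Sum>j<T0. f j * e (int j - int T0 + 1)) = (\<Sum>j<T0. f j * Iseed (int j - int T0 + 1))" for f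
    by (intro sum.cong refl) (auto simp: seed)
  have eq: "A *\<^sub>v x = L0 *\<^sub>v b"
  proof (rule eq_vecI)
    fix i assume "i < dim_vec (L0 *\<^sub>v b)"
    then have i: "i < t" using L0c by auto
    have "(A *\<^sub>v x) $ i = x $ i - (L *\<^sub>v x) $ i"
    proof -
      have "A *\<^sub>v x = 1\<^sub>m t *\<^sub>v x - L *\<^sub>v x"
        unfolding A_def by (rule minus_mult_distrib_mat_vec[OF _ Lc xc]) simp
      then show ?thesis using xc Lc i by simp
    qed
    also have "x $ i = e (int i + 1)" unfolding x_def using i by simp
    also have "\<dots> = (\<Sum>j<T0. W (int i + 1) (int j - int T0 + 1) * e (int j - int T0 + 1))
        + (\<Sum>k<i. W (int i + 1) (int k + 1) * e (int k + 1))"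
      using rec[of "int i + 1"] i by (simp add: split_sum)
    also have "(L *\<^sub>v x) $ i = (\<Sum>k<i. W (int i + 1) (int k + 1) * e (int k + 1))"
      unfolding L_def using i xc by (simp add: LamM_mult x_def)
    also have "(L0 *\<^sub>v b) $ i = (\<Sum>j<T0. W (int i + 1) (int j - int T0 + 1) * Iseed (int j - int T0 + 1))"
      unfolding L0_def b_def using i by (simp add: LamM0_mult)
    ultimately show "(A *\<^sub>v x) $ i = (L0 *\<^sub>v b) $ i" by (simp add: seedsum)
  qed (use Ac L0c in auto)
  have "Determinant.det A = prod_list (diag_mat A)"
    by (rule det_lower_triangular[OF _ Ac]) (auto simp: A_def L_def LamM_def)
  also have "diag_mat A = replicate t 1"
    by (rule nth_equalityI) (auto simp: diag_mat_def A_def L_def LamM_def)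
  finally have "Determinant.det A = 1" by simp
  then have "A \<in> Units (ring_mat TYPE(real) t ())" using det_non_zero_imp_unit[OF Ac] by auto
  then have "mat_inverse A \<noteq> None" using mat_inverse(1)[OF Ac, of "()"] by auto
  then obtain Inv where mi: "mat_inverse A = Some Inv" by auto
  from mat_inverse(2)[OF Ac mi] have IA: "Inv * A = 1\<^sub>m t" and Ic: "Inv \<in> carrier_mat t t" by auto
  have "x = (Inv * A) *\<^sub>v x" using IA xc by simp
  also have "\<dots> = Inv *\<^sub>v (L0 *\<^sub>v b)" using Ic Ac xc eq by simp
  also have "\<dots> = (Inv * L0) *\<^sub>v b" using Ic L0c bc by simp
  finally have xeq: "x = (Inv * L0) *\<^sub>v b" .
  have t1': "int (t - 1) + 1 = int t" using t1 by simp
  have part1: "e (int t) = ((Inv * L0) *\<^sub>v b) $ (t - 1)"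
    unfolding xeq[symmetric] x_def using t1 t1' by simp
  have "((P * Inv * L0 + P0) *\<^sub>v b) = P *\<^sub>v x + P0 *\<^sub>v b"
  proof -
    have PI: "P * Inv \<in> carrier_mat t t" using Pc Ic by auto
    have "(P * Inv * L0) *\<^sub>v b = (P * Inv) *\<^sub>v (L0 *\<^sub>v b)"
      by (rule assoc_mult_mat_vec[OF PI L0c bc])
    also have "\<dots> = P *\<^sub>v (Inv *\<^sub>v (L0 *\<^sub>v b))"
      using Pc Ic L0c bc by (intro assoc_mult_mat_vec) auto
    also have "\<dots> = P *\<^sub>v x" using xeq Ic L0c bc by simp
    finally have 1: "(P * Inv * L0) *\<^sub>v b = P *\<^sub>v x" .
    have "(P * Inv * L0 + P0) *\<^sub>v b = (P * Inv * L0) *\<^sub>v b + P0 *\<^sub>v b"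
      using PI L0c P0c bc by (intro add_mult_distrib_mat_vec[of _ t T0]) auto
    then show ?thesis using 1 by simp
  qed
  then have "((P * Inv * L0 + P0) *\<^sub>v b) $ (t - 1) = (P *\<^sub>v x) $ (t - 1) + (P0 *\<^sub>v b) $ (t - 1)"
    using t1 P0c by simp
  also have "(P *\<^sub>v x) $ (t - 1) = (\<Sum>k<t - 1. PiW \<pi> \<alpha> (int t) (int k + 1) * e (int k + 1))"
    unfolding P_def using t1 t1' xc by (simp add: LamM_mult x_def)
  also have "(P0 *\<^sub>v b) $ (t - 1) = (\<Sum>j<T0. PiW \<pi> \<alpha> (int t) (int j - int T0 + 1) * Iseed (int j - int T0 + 1))"
    unfolding P0_def b_def using t1 t1' by (simp add: LamM0_mult)
  finally have "((P * Inv * L0 + P0) *\<^sub>v b) $ (t - 1) = (\<Sum>k<t - 1. PiW \<pi> \<alpha> (int t) (int k + 1) * e (int k + 1)) + (\<Sum>j<T0. PiW \<pi> \<alpha> (int t) (int j - int T0 + 1) * Iseed (int j - int T0 + 1))" .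
  moreover have "ey = (\<Sum>j<T0. PiW \<pi> \<alpha> (int t) (int j - int T0 + 1) * e (int j - int T0 + 1)) + (\<Sum>k<t - 1. PiW \<pi> \<alpha> (int t) (int k + 1) * e (int k + 1))"
    using yrec split_sum[of "\<lambda>s. PiW \<pi> \<alpha> (int t) s * e s" T0 "t - 1"] t1'
    by (simp add: PiW_def sum_distrib_left mult_ac)
  ultimately have part2: "ey = ((P * Inv * L0 + P0) *\<^sub>v b) $ (t - 1)" by (simp add: seedsum)
  show ?thesis using part1 part2 mi unfolding Let_def L_def L0_def P_def P0_def b_def A_def by simp
qed


lemma generic:
  assumes t1: "t \<ge> 1" and P: "prob_space M" and C: "cf_model M T0 t Iseed W \<pi> \<alpha> I Y"
  shows "let L = LamM t W; L0 = LamM0 t T0 W;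
            P = LamM t (PiW \<pi> \<alpha>); P0 = LamM0 t T0 (PiW \<pi> \<alpha>);
            Inv = the (mat_inverse (1\<^sub>m t - L))
        in integral\<^sup>L M (I (int t)) = ((Inv * L0) *\<^sub>v Ibar0 T0 Iseed) $ (t - 1)
         \<and> integral\<^sup>L M (Y (int t)) = ((P * Inv * L0 + P0) *\<^sub>v Ibar0 T0 Iseed) $ (t - 1)"
proof (rule lin_alg[where e="\<lambda>s. integral\<^sup>L M (I s)", OF t1])
  show "integral\<^sup>L M (I s) = Iseed s" if "1 - int T0 \<le> s" "s \<le> 0" for s
    using cf_expect(1)[OF P C, of s] that by simp
  show "integral\<^sup>L M (I r) = (\<Sum>s\<in>{1 - int T0..<r}. W r s * integral\<^sup>L M (I s))"
    if "r \<in> {1..int t}" for r using cf_expect(3)[OF P C that] .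
  show "integral\<^sup>L M (Y (int t)) = \<alpha> (int t) * (\<Sum>s\<in>{1 - int T0..<int t}. \<pi> (nat (int t - s)) * integral\<^sup>L M (I s))"
    using cf_expect(4)[OF P C, of "int t"] t1 by simp
qed

theorem theorem1:
  fixes T0 t :: nat and \<beta>0 \<beta>A K :: real
    and g \<pi> :: "nat \<Rightarrow> real" and \<alpha> a Iseed :: "int \<Rightarrow> real"
  assumes "T0 \<ge> 1" and "t \<ge> 1"
    and "\<And>k. g k \<ge> 0" and "\<And>k. \<pi> k \<ge> 0"
    and "K > 0"
  shows
   "(\<forall>(M :: 'a measure) I Y. prob_space M \<longrightarrow>
       cf_model M T0 t Iseed (W_exp g \<beta>0 \<beta>A a) \<pi> \<alpha> I Y \<longrightarrow>
       (let L = LamM t (W_exp g \<beta>0 \<beta>A a); L0 = LamM0 t T0 (W_exp g \<beta>0 \<beta>A a);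
            P = LamM t (PiW \<pi> \<alpha>); P0 = LamM0 t T0 (PiW \<pi> \<alpha>);
            Inv = the (mat_inverse (1\<^sub>m t - L))
        in integral\<^sup>L M (I (int t)) = ((Inv * L0) *\<^sub>v Ibar0 T0 Iseed) $ (t - 1)
         \<and> integral\<^sup>L M (Y (int t)) = ((P * Inv * L0 + P0) *\<^sub>v Ibar0 T0 Iseed) $ (t - 1)))
  \<and> (\<forall>(M :: 'a measure) I Y. prob_space M \<longrightarrow>
       cf_model M T0 t Iseed (W_mult K g \<beta>0 \<beta>A a) \<pi> \<alpha> I Y \<longrightarrow>
       (let L = LamM t (W_mult K g \<beta>0 \<beta>A a); L0 = LamM0 t T0 (W_mult K g \<beta>0 \<beta>A a);
            P = LamM t (PiW \<pi> \<alpha>); P0 = LamM0 t T0 (PiW \<pi> \<alpha>);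
            Inv = the (mat_inverse (1\<^sub>m t - L))
        in integral\<^sup>L M (I (int t)) = ((Inv * L0) *\<^sub>v Ibar0 T0 Iseed) $ (t - 1)
         \<and> integral\<^sup>L M (Y (int t)) = ((P * Inv * L0 + P0) *\<^sub>v Ibar0 T0 Iseed) $ (t - 1)))"
  using generic[OF assms(2)] by blast

end
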